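(* Let $n\ge1$, let $\lambda=(\lambda_0,\dots,\lambda_n)$ be a marking of $A_n$ with $\lambda_0\ge\lambda_1\ge\cdots\ge\lambda_n$, and let $(U_1,U_2)$ be any admissible decomposition of $(P_n,A_n,\lambda)$. Then the number of lattice points in $\mathcal{CO}_{U_1,U_2}(\lambda)$ is $$\prod_{0\le i<j\le n}\frac{\lambda_i-\lambda_j+j-i}{j-i}.$$
   Context: $P_n$ is the poset on $\{p_{i,j}: 0\le i\le j\le n\}$ whose cover relations are exactly $p_{i-1,j}\to p_{i,j}\to p_{i-1,j-1}$ for $1\le i\le j\le n$ ($q\to p$ means $p$ covers $q$). $A_n=\{p_{0,0},\dots,p_{0,n}\}$ with marking $\lambda(p_{0,k})=\lambda_k\in\mathbb{Z}_{\ge0}$. A decomposition is a pair $(U_1,U_2)$ of disjoint sets with $U_1\cup U_2=P_n\setminus A_n$; it is admissible if there are no $u_1\in U_1$, $u_2\in U_2$ with $u_1\prec u_2$. With $A_1=A_n\cup U_1$, the marked chain-order polytope $\mathcal{CO}_{U_1,U_2}(\lambda)\subset\mathbb{R}^{P_n\setminus A_n}$ is the set of $(x_p)$ such that: (i) $x_p\le\lambda_a$ whenever $p\in U_1$, $a\in A_n$, $p\prec a$; (ii) $\lambda_b\le x_q$ whenever $q\in U_1$, $b\in A_n$, $b\prec q$; (iii) $x_p\le x_q$ whenever $p,q\in U_1$, $p\prec q$; (iv) $x_p\ge0$ for $p\in U_2$; (v) for every chain $b\prec p_m\prec\cdots\prec p_1\prec a$ with $m\ge1$, $a,b\in A_1$,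 $p_i\in U_2$: $x_{p_1}+\cdots+x_{p_m}\le\lambda_a-\lambda_b$, where $\lambda_q$ means $x_q$ for $q\in U_1$; (vi) for every chain $p_1\prec\cdots\prec p_s\prec q$ with $q\in U_1$, $p_i\in U_2$: $x_{p_1}+\cdots+x_{p_s}\le x_q$. (Here $\lambda_a$ for $a=p_{0,k}$ means $\lambda_k$.) Lattice points are the points of $\mathcal{CO}_{U_1,U_2}(\lambda)\cap\mathbb{Z}^{P_n\setminus A_n}$. *)

theory Defs
  imports Complex_Main
begin

text \<open>Elements p_{i,j} of P_n are encoded as pairs (i,j) with 0 \<le> i \<le> j \<le> n.
  A_n = {p_{0,k}} is the set of pairs (0,k).\<close>

definition Pn :: "nat \<Rightarrow> (nat \<times> nat) set" where
  "Pn n = {(i, j). i \<le> j \<and> j \<le> n}"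

definition An :: "nat \<Rightarrow> (nat \<times> nat) set" where
  "An n = {(0, k) | k. k \<le> n}"

text \<open>cover n q p: p covers q (q \<rightarrow> p).\<close>
definition cover :: "nat \<Rightarrow> nat \<times> nat \<Rightarrow> nat \<times> nat \<Rightarrow> bool" where
  "cover n q p \<longleftrightarrow> (\<exists>i j. 1 \<le> i \<and> i \<le> j \<and> j \<le> n \<and>
      ((q = (i - 1, j) \<and> p = (i, j)) \<or> (q = (i, j) \<and> p = (i - 1, j - 1))))"

definition prec :: "nat \<Rightarrow> nat \<times> nat \<Rightarrow> nat \<times> nat \<Rightarrow> bool" where
  "prec n = tranclp (cover n)"

definition admissible :: "nat \<Rightarrow> (nat \<times> nat) set \<Rightarrow> (nat \<times> nat) set \<Rightarrow> bool" where
  "admissible n U1 U2 \<longleftrightarrow> U1 \<inter> U2 = {} \<and> U1 \<union> U2 = Pn n - An n \<and>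
     \<not> (\<exists>u1\<in>U1. \<exists>u2\<in>U2. prec n u1 u2)"

text \<open>Value at a point of A_1 = A_n \<union> U_1: the marking on A_n, the coordinate on U_1.\<close>
definition lamx :: "(nat \<Rightarrow> nat) \<Rightarrow> (nat \<times> nat \<Rightarrow> 'a::semiring_1) \<Rightarrow> nat \<times> nat \<Rightarrow> 'a" where
  "lamx lam x q = (if fst q = 0 then of_nat (lam (snd q)) else x q)"

text \<open>Membership in the marked chain-order polytope CO_{U1,U2}(lam); x is a point of
  R^{P_n \ A_n}, encoded as a function vanishing outside P_n \ A_n.\<close>
definition in_CO :: "nat \<Rightarrow> (nat \<times> nat) set \<Rightarrow> (nat \<times> nat) set \<Rightarrow> (nat \<Rightarrow> nat)
     \<Rightarrow> (nat \<times> nat \<Rightarrow> 'a::linordered_idom) \<Rightarrow> bool" where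
  "in_CO n U1 U2 lam x \<longleftrightarrow>
     (\<forall>p. p \<notin> Pn n - An n \<longrightarrow> x p = 0) \<and>
     (\<forall>p\<in>U1. \<forall>a\<in>An n. prec n p a \<longrightarrow> x p \<le> of_nat (lam (snd a))) \<and>
     (\<forall>q\<in>U1. \<forall>b\<in>An n. prec n b q \<longrightarrow> of_nat (lam (snd b)) \<le> x q) \<and>
     (\<forall>p\<in>U1. \<forall>q\<in>U1. prec n p q \<longrightarrow> x p \<le> x q) \<and>
     (\<forall>p\<in>U2. 0 \<le> x p) \<and>
     (\<forall>a\<in>An n \<union> U1. \<forall>b\<in>An n \<union> U1. \<forall>ps. ps \<noteq> [] \<and> set ps \<subseteq> U2 \<and>
         sorted_wrt (\<lambda>u v. prec n v u) ps \<and> prec n (hd ps) a \<and> prec n b (last ps)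
         \<longrightarrow> sum_list (map x ps) \<le> lamx lam x a - lamx lam x b) \<and>
     (\<forall>q\<in>U1. \<forall>ps. ps \<noteq> [] \<and> set ps \<subseteq> U2 \<and>
         sorted_wrt (prec n) ps \<and> prec n (last ps) q
         \<longrightarrow> sum_list (map x ps) \<le> x q)"

definition lattice_points :: "nat \<Rightarrow> (nat \<times> nat) set \<Rightarrow> (nat \<times> nat) set \<Rightarrow> (nat \<Rightarrow> nat)
     \<Rightarrow> (nat \<times> nat \<Rightarrow> int) set" where
  "lattice_points n U1 U2 lam = {x. in_CO n U1 U2 lam x}"

end

theory Submission
  imports Defs "Jordan_Normal_Form.Determinant"
begin


lemma det_scale:
  fixes a b :: "nat \<Rightarrow> 'a::comm_ring_1"
  shows "det (mat m m (\<lambda>(i,k). a i * b k * C i k)) =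
    (\<Prod>i=0..<m. a i) * (\<Prod>k=0..<m. b k) * det (mat m m (\<lambda>(i,k). C i k))"
proof -
  have "det (mat m m (\<lambda>(i,k). a i * b k * C i k)) =
     (\<Sum>p\<in>{p. p permutes {0..<m}}. signof p * (\<Prod>i=0..<m. a i * b (p i) * C i (p i)))"
    by (subst det_def'[where n=m]) (auto intro!: sum.cong prod.cong simp: permutes_in_image)
  also have "\<dots> = (\<Sum>p\<in>{p. p permutes {0..<m}}. (\<Prod>i=0..<m. a i) * (\<Prod>k=0..<m. b k) *
       (signof p * (\<Prod>i=0..<m. C i (p i))))"
  proof (rule sum.cong[OF refl])
    fix p assume "p \<in> {p. p permutes {0..<m}}"
    hence p: "p permutes {0..<m}" by simp
    have "(\<Prod>i=0..<m. b (p i)) = (\<Prod>k=0..<m. b k)"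
      using prod.permute[OF p, of b] by (simp add: comp_def)
    thus "signof p * (\<Prod>i=0..<m. a i * b (p i) * C i (p i)) = (\<Prod>i=0..<m. a i) * (\<Prod>k=0..<m. b k) *
       (signof p * (\<Prod>i=0..<m. C i (p i)))"
      by (simp add: prod.distrib)
  qed
  also have "\<dots> = (\<Prod>i=0..<m. a i) * (\<Prod>k=0..<m. b k) * det (mat m m (\<lambda>(i,k). C i k))"
    by (subst det_def'[where n=m]) (auto simp: sum_distrib_left intro!: sum.cong prod.cong simp: permutes_in_image)
  finally show ?thesis .
qed

definition Dm :: "nat \<Rightarrow> (nat \<Rightarrow> real) \<Rightarrow> real mat" where
  "Dm m x = mat m m (\<lambda>(i,k). x i gchoose k)"

definition Dd :: "nat \<Rightarrow> (nat \<Rightarrow> real) \<Rightarrow> real" where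
  "Dd m x = det (Dm m x)"

definition Ecol :: "nat \<Rightarrow> real \<Rightarrow> real mat" where
  "Ecol N x0 = mat N N (\<lambda>(j,k). if j = k then 1 else if Suc j = k then -(x0 - of_nat j)/of_nat k else 0)"

lemma ut_Ecol: "upper_triangular (Ecol N x0)"
  unfolding upper_triangular_def Ecol_def by simp

lemma prod_list_ones: "prod_list (map (\<lambda>_. (1::real)) [0..<N]) = 1"
  by (induct N) simp_all

lemma car_Ecol: "Ecol N x0 \<in> carrier_mat N N"
  unfolding Ecol_def by simp

lemma det_Ecol: "det (Ecol N x0) = 1"
proof -
  have "det (Ecol N x0) = prod_list (diag_mat (Ecol N x0))"
    by (rule det_upper_triangular[OF ut_Ecol car_Ecol])
  also have "diag_mat (Ecol N x0) = map (\<lambda>_. 1) [0..<N]"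
  proof -
    have d: "dim_row (Ecol N x0) = N" using car_Ecol by auto
    have e: "\<And>i. i < N \<Longrightarrow> Ecol N x0 $$ (i,i) = 1" unfolding Ecol_def by simp
    show ?thesis unfolding diag_mat_def d by (rule map_cong) (auto simp: e)
  qed
  finally show ?thesis using prod_list_ones by simp
qed

lemma gchoose_step: "(a::real) gchoose (Suc k) = (a - of_nat k) / of_nat (Suc k) * (a gchoose k)"
proof -
  have "of_nat (Suc k) * (a gchoose Suc k) = (a - of_nat k) * (a gchoose k)"
    using gbinomial_mult_1[of a k] by (simp add: algebra_simps)
  moreover have "(of_nat (Suc k) :: real) \<noteq> 0" by simp
  ultimately show ?thesis by (simp add: eq_divide_eq mult.commute)
qed


lemma Dm_dims[simp]: "dim_row (Dm m x) = m" "dim_col (Dm m x) = m"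
  unfolding Dm_def by simp_all
lemma Ecol_dims[simp]: "dim_row (Ecol m x) = m" "dim_col (Ecol m x) = m"
  unfolding Ecol_def by simp_all
lemma Dm_car: "Dm m x \<in> carrier_mat m m"
  unfolding carrier_mat_def by simp
lemma Dm_idx: "i < m \<Longrightarrow> k < m \<Longrightarrow> Dm m x $$ (i,k) = x i gchoose k"
  unfolding Dm_def by simp
lemma Ecol_idx: "j < m \<Longrightarrow> k < m \<Longrightarrow> Ecol m x0 $$ (j,k) =
   (if j = k then 1 else if Suc j = k then -(x0 - of_nat j)/of_nat k else 0)"
  unfolding Ecol_def by simp

lemma DE_entry:
  assumes i: "i < N" and k: "k < N"
  shows "(Dm N x * Ecol N (x 0)) $$ (i,k) =
    (if k = 0 then 1 else (x i - x 0) / of_nat k * (x i gchoose (k - 1)))"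
proof -
  have "(Dm N x * Ecol N (x 0)) $$ (i,k) = (\<Sum>j\<in>{0..<N}. (x i gchoose j) *
     (if j = k then 1 else if Suc j = k then -(x 0 - of_nat j)/of_nat k else 0))"
  proof -
    have "(Dm N x * Ecol N (x 0)) $$ (i,k) = row (Dm N x) i \<bullet> col (Ecol N (x 0)) k"
      using i k by (simp add: Dm_dims Ecol_dims)
    also have "\<dots> = (\<Sum>j\<in>{0..<N}. row (Dm N x) i $ j * col (Ecol N (x 0)) k $ j)"
      unfolding scalar_prod_def by (simp add: Ecol_dims)
    also have "\<dots> = (\<Sum>j\<in>{0..<N}. (x i gchoose j) *
     (if j = k then 1 else if Suc j = k then -(x 0 - of_nat j)/of_nat k else 0))"
      by (rule sum.cong[OF refl]) (use i k in \<open>simp add: Dm_dims Ecol_dims Dm_idx Ecol_idx\<close>)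
    finally show ?thesis .
  qed
  also have "\<dots> = (\<Sum>j\<in>{0..<N}. (if j = k then (x i gchoose j) else 0) +
       (if Suc j = k then (x i gchoose j) * (-(x 0 - of_nat j)/of_nat k) else 0))"
    by (rule sum.cong) auto
  also have "\<dots> = (x i gchoose k) + (if k = 0 then 0 else (x i gchoose (k-1)) * (-(x 0 - of_nat (k-1))/of_nat k))"
  proof -
    have "(\<Sum>j\<in>{0..<N}. (if Suc j = k then (x i gchoose j) * (-(x 0 - of_nat j)/of_nat k) else 0)) =
      (if k = 0 then 0 else (x i gchoose (k-1)) * (-(x 0 - of_nat (k-1))/of_nat k))"
    proof (cases k)
      case 0 thus ?thesis by simp
    next
      case (Suc k')
      have "(\<Sum>j\<in>{0..<N}. (if Suc j = k then (x i gchoose j) * (-(x 0 - of_nat j)/of_nat k) else 0)) =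
         (\<Sum>j\<in>{0..<N}. (if j = k' then (x i gchoose j) * (-(x 0 - of_nat j)/of_nat k) else 0))"
        using Suc by (intro sum.cong) auto
      also have "\<dots> = (x i gchoose k') * (-(x 0 - of_nat k')/of_nat k)"
        using Suc k by (subst sum.delta) auto
      finally show ?thesis using Suc by simp
    qed
    thus ?thesis using k by (simp add: sum.distrib)
  qed
  also have "\<dots> = (if k = 0 then 1 else (x i - x 0) / of_nat k * (x i gchoose (k - 1)))"
  proof (cases k)
    case (Suc k')
    have g: "(x i gchoose k) = (x i - of_nat k') / of_nat k * (x i gchoose k')"
      using gchoose_step[of "x i" k'] Suc by simp
    have "(x i gchoose k) + (x i gchoose k') * (-(x 0 - of_nat k')/of_nat k) = (x i - x 0) / of_nat k * (x i gchoose k')"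
      using g by (simp add: diff_divide_distrib algebra_simps)
    thus ?thesis using Suc by simp
  qed simp
  finally show ?thesis .
qed

lemma det_first_row:
  assumes A: "(A :: 'a :: comm_ring_1 mat) \<in> carrier_mat (Suc m) (Suc m)"
    and a0: "A $$ (0,0) = 1" and a1: "\<And>j. 0 < j \<Longrightarrow> j < Suc m \<Longrightarrow> A $$ (0,j) = 0"
  shows "det A = det (mat_delete A 0 0)"
proof -
  have "det A = (\<Sum>j<Suc m. A $$ (0,j) * cofactor A 0 j)"
    by (rule laplace_expansion_row[OF A]) simp
  also have "\<dots> = (\<Sum>j<Suc m. if j = 0 then det (mat_delete A 0 0) else 0)"
    by (rule sum.cong[OF refl]) (simp add: a0 a1 cofactor_def)
  also have "\<dots> = det (mat_delete A 0 0)" by simp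
  finally show ?thesis .
qed

lemma Dd_rec: "Dd (Suc m) x = (\<Prod>i=0..<m. x (Suc i) - x 0) / fact m * Dd m (\<lambda>i. x (Suc i))"
proof -
  let ?N = "Suc m"
  let ?A = "Dm ?N x * Ecol ?N (x 0)"
  have A: "?A \<in> carrier_mat ?N ?N" by (rule mult_carrier_mat[OF Dm_car car_Ecol])
  have "Dd ?N x = det ?A"
    unfolding Dd_def by (subst det_mult[OF Dm_car car_Ecol]) (simp add: det_Ecol)
  also have "\<dots> = det (mat_delete ?A 0 0)"
    by (rule det_first_row[OF A]) (simp_all add: DE_entry del: index_mult_mat(1))
  also have "mat_delete ?A 0 0 = mat m m (\<lambda>(i,k). (x (Suc i) - x 0) * (1 / of_nat (Suc k)) * (x (Suc i) gchoose k))"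
    by (rule eq_matI) (simp_all add: mat_delete_def DE_entry del: index_mult_mat(1))
  also have "det \<dots> = (\<Prod>i=0..<m. x (Suc i) - x 0) * (\<Prod>k=0..<m. 1 / of_nat (Suc k)) * Dd m (\<lambda>i. x (Suc i))"
    unfolding Dd_def Dm_def by (rule det_scale[where C = "\<lambda>i k. x (Suc i) gchoose k"])
  also have "(\<Prod>k=0..<m. 1 / of_nat (Suc k)) = (1::real) / fact m"
    by (simp add: fact_prod_Suc prod_dividef)
  finally show ?thesis by simp
qed

definition Pp :: "nat \<Rightarrow> (nat \<Rightarrow> real) \<Rightarrow> real" where
  "Pp m x = (\<Prod>(i,j)\<in>{(i,j). i < j \<and> j < m}. (x j - x i) / (real j - real i))"

lemma pairs_Suc: "{(i,j). i < j \<and> j < Suc m} =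
   (\<lambda>j. (0, Suc j)) ` {0..<m} \<union> (\<lambda>(i,j). (Suc i, Suc j)) ` {(i,j). i < j \<and> j < m}"
proof (intro equalityI subsetI)
  fix p assume "p \<in> {(i,j). i < j \<and> j < Suc m}"
  then obtain i j where p: "p = (i,j)" "i < j" "j < Suc m" by auto
  show "p \<in> (\<lambda>j. (0, Suc j)) ` {0..<m} \<union> (\<lambda>(i,j). (Suc i, Suc j)) ` {(i,j). i < j \<and> j < m}"
  proof (cases i)
    case 0 thus ?thesis using p by (auto intro!: image_eqI[of _ _ "j - 1"])
  next
    case (Suc i') thus ?thesis using p by (auto intro!: image_eqI[of _ _ "(i', j - 1)"])
  qed
qed auto

lemma Pp_rec: "Pp (Suc m) x = (\<Prod>i=0..<m. x (Suc i) - x 0) / fact m * Pp m (\<lambda>i. x (Suc i))"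
proof -
  let ?f = "\<lambda>(i,j). (x j - x i) / (real j - real i)"
  have fin: "finite {(i,j). i < j \<and> j < m}"
    by (rule finite_subset[of _ "{0..<m} \<times> {0..<m}"]) auto
  have disj: "(\<lambda>j. (0::nat, Suc j)) ` {0..<m} \<inter> (\<lambda>(i,j). (Suc i, Suc j)) ` {(i,j). i < j \<and> j < m} = {}"
    by auto
  have "Pp (Suc m) x = prod ?f ((\<lambda>j. (0, Suc j)) ` {0..<m}) * prod ?f ((\<lambda>(i,j). (Suc i, Suc j)) ` {(i,j). i < j \<and> j < m})"
    unfolding Pp_def pairs_Suc by (rule prod.union_disjoint) (use fin disj in auto)
  also have "prod ?f ((\<lambda>j. (0, Suc j)) ` {0..<m}) = (\<Prod>j=0..<m. (x (Suc j) - x 0) / real (Suc j))"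
    by (subst prod.reindex) (auto simp: inj_on_def)
  also have "\<dots> = (\<Prod>i=0..<m. x (Suc i) - x 0) / fact m"
    by (simp add: prod_dividef fact_prod_Suc)
  also have "prod ?f ((\<lambda>(i,j). (Suc i, Suc j)) ` {(i,j). i < j \<and> j < m}) = Pp m (\<lambda>i. x (Suc i))"
    unfolding Pp_def by (subst prod.reindex) (auto simp: inj_on_def intro!: prod.cong)
  finally show ?thesis .
qed

lemma Dd_0: "Dd 0 x = 1"
  unfolding Dd_def by (rule det_dim_zero) (simp add: Dm_car)

lemma Pp_0: "Pp 0 x = 1"
  unfolding Pp_def by simp

lemma Dd_Pp: "Dd m x = Pp m x"
proof (induct m arbitrary: x)
  case 0 thus ?case by (simp add: Dd_0 Pp_0)
next
  case (Suc m) thus ?case by (simp add: Dd_rec Pp_rec)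
qed

lemma gch_tele:
  assumes "a \<le> b"
  shows "(\<Sum>t\<in>{a..b}. (y - real_of_int t) gchoose k) =
    ((y - of_int a + 1) gchoose Suc k) - ((y - of_int b) gchoose Suc k)"
proof -
  obtain d where b: "b = a + int d" using assms by (metis zle_iff_zadd)
  have "(\<Sum>t\<in>{a..a + int d}. (y - real_of_int t) gchoose k) =
    ((y - of_int a + 1) gchoose Suc k) - ((y - of_int (a + int d)) gchoose Suc k)"
  proof (induct d)
    case 0
    show ?case using gbinomial_Suc_Suc[of "y - of_int a" k] by simp
  next
    case (Suc d)
    define z where "z = y - of_int (a + int d + 1)"
    have e1: "y - of_int (a + int d) = z + 1" unfolding z_def by simp
    have e2: "y - of_int (a + int (Suc d)) = z" unfolding z_def by simp
    have set: "{a..a + int (Suc d)} = insert (a + int d + 1) {a..a + int d}" by auto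
    have "(\<Sum>t\<in>{a..a + int (Suc d)}. (y - real_of_int t) gchoose k) =
       (z gchoose k) + (\<Sum>t\<in>{a..a + int d}. (y - real_of_int t) gchoose k)"
      unfolding set z_def by (subst sum.insert) auto
    also have "\<dots> = ((y - of_int a + 1) gchoose Suc k) - (z gchoose Suc k)"
      unfolding Suc e1 gbinomial_Suc_Suc by simp
    finally show ?case unfolding e2 .
  qed
  thus ?thesis using b by simp
qed

lemma sum_Dd:
  assumes mono: "\<And>j. j < m \<Longrightarrow> c (Suc j) \<le> c j"
  shows "(\<Sum>\<mu>\<in>PiE {0..<m} (\<lambda>j. {c (Suc j)..c j}). Dd m (\<lambda>i. real i - of_int (\<mu> i))) =
    det (mat m m (\<lambda>(i,k). ((real (Suc i) - of_int (c (Suc i))) gchoose Suc k) - ((real i - of_int (c i)) gchoose Suc k)))"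
proof -
  let ?P = "{p. p permutes {0..<m}}"
  let ?B = "PiE {0..<m} (\<lambda>j. {c (Suc j)..c j})"
  let ?x = "\<lambda>i. real i - of_int (c i)"
  have "(\<Sum>\<mu>\<in>?B. Dd m (\<lambda>i. real i - of_int (\<mu> i))) =
     (\<Sum>\<mu>\<in>?B. \<Sum>p\<in>?P. signof p * (\<Prod>i=0..<m. (real i - of_int (\<mu> i)) gchoose p i))"
    unfolding Dd_def
    by (intro sum.cong refl, subst det_def'[OF Dm_car]) (auto intro!: sum.cong prod.cong simp: Dm_idx permutes_in_image)
  also have "\<dots> = (\<Sum>p\<in>?P. signof p * (\<Sum>\<mu>\<in>?B. (\<Prod>i=0..<m. (real i - of_int (\<mu> i)) gchoose p i)))"
    by (subst sum.swap) (simp add: sum_distrib_left)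
  also have "\<dots> = (\<Sum>p\<in>?P. signof p * (\<Prod>i=0..<m. (?x (Suc i) gchoose Suc (p i)) - (?x i gchoose Suc (p i))))"
  proof (rule sum.cong[OF refl])
    fix p
    have "(\<Sum>\<mu>\<in>?B. (\<Prod>i=0..<m. (real i - of_int (\<mu> i)) gchoose p i)) =
       (\<Prod>i=0..<m. \<Sum>t\<in>{c (Suc i)..c i}. (real i - of_int t) gchoose p i)"
      by (rule prod_sum_PiE[symmetric]) auto
    also have "\<dots> = (\<Prod>i=0..<m. (?x (Suc i) gchoose Suc (p i)) - (?x i gchoose Suc (p i)))"
      by (rule prod.cong[OF refl], subst gch_tele) (use mono in \<open>auto simp: algebra_simps\<close>)
    finally show "signof p * (\<Sum>\<mu>\<in>?B. (\<Prod>i=0..<m. (real i - of_int (\<mu> i)) gchoose p i)) =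
       signof p * (\<Prod>i=0..<m. (?x (Suc i) gchoose Suc (p i)) - (?x i gchoose Suc (p i)))" by simp
  qed
  also have "\<dots> = det (mat m m (\<lambda>(i,k). (?x (Suc i) gchoose Suc k) - (?x i gchoose Suc k)))"
    by (subst det_def'[where n=m]) (auto intro!: sum.cong prod.cong simp: permutes_in_image)
  finally show ?thesis .
qed

definition Lrow :: "nat \<Rightarrow> real mat" where
  "Lrow N = mat N N (\<lambda>(i,j). if i = j then 1 else if i = Suc j then -1 else 0)"

lemma Lrow_car: "Lrow N \<in> carrier_mat N N"
  unfolding Lrow_def carrier_mat_def by simp

lemma Lrow_dims[simp]: "dim_row (Lrow N) = N" "dim_col (Lrow N) = N"
  unfolding Lrow_def by simp_all

lemma Lrow_idx: "i < N \<Longrightarrow> j < N \<Longrightarrow> Lrow N $$ (i,j) = (if i = j then 1 else if i = Suc j then -1 else 0)"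
  unfolding Lrow_def by simp

lemma det_Lrow: "det (Lrow N) = 1"
proof -
  have "det (Lrow N) = prod_list (diag_mat (Lrow N))"
    by (rule det_lower_triangular[OF _ Lrow_car]) (simp add: Lrow_idx)
  also have "diag_mat (Lrow N) = map (\<lambda>_. 1) [0..<N]"
  proof -
    have d: "dim_row (Lrow N) = N" using Lrow_car by auto
    show ?thesis unfolding diag_mat_def d by (rule map_cong) (auto simp: Lrow_idx)
  qed
  finally show ?thesis using prod_list_ones by simp
qed

lemma LB_entry:
  assumes i: "i < N" and k: "k < N"
  shows "(Lrow N * Dm N x) $$ (i,k) = (x i gchoose k) - (if i = 0 then 0 else x (i - 1) gchoose k)"
proof -
  have "(Lrow N * Dm N x) $$ (i,k) = row (Lrow N) i \<bullet> col (Dm N x) k"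
    using i k Lrow_car by simp
  also have "\<dots> = (\<Sum>j\<in>{0..<N}. row (Lrow N) i $ j * col (Dm N x) k $ j)"
    unfolding scalar_prod_def by simp
  also have "\<dots> = (\<Sum>j\<in>{0..<N}. (if j = i then x j gchoose k else 0) - (if Suc j = i then x j gchoose k else 0))"
    by (rule sum.cong[OF refl]) (use i k Lrow_car in \<open>auto simp: Lrow_idx Dm_idx\<close>)
  also have "\<dots> = (x i gchoose k) - (if i = 0 then 0 else x (i - 1) gchoose k)"
  proof (cases i)
    case 0 thus ?thesis using i by (simp add: sum_subtractf)
  next
    case (Suc i')
    have "(\<Sum>j\<in>{0..<N}. (if Suc j = i then x j gchoose k else 0)) = (\<Sum>j\<in>{0..<N}. (if j = i' then x j gchoose k else 0))"
      using Suc by (intro sum.cong) auto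
    thus ?thesis using i Suc by (simp add: sum_subtractf)
  qed
  finally show ?thesis .
qed

lemma det_first_col:
  assumes A: "(A :: 'a :: comm_ring_1 mat) \<in> carrier_mat (Suc m) (Suc m)"
    and a0: "A $$ (0,0) = 1" and a1: "\<And>i. 0 < i \<Longrightarrow> i < Suc m \<Longrightarrow> A $$ (i,0) = 0"
  shows "det A = det (mat_delete A 0 0)"
proof -
  have "det A = (\<Sum>i<Suc m. A $$ (i,0) * cofactor A i 0)"
    by (rule laplace_expansion_column[OF A]) simp
  also have "\<dots> = (\<Sum>i<Suc m. if i = 0 then det (mat_delete A 0 0) else 0)"
    by (rule sum.cong[OF refl]) (simp add: a0 a1 cofactor_def)
  also have "\<dots> = det (mat_delete A 0 0)" by simp
  finally show ?thesis .
qed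

lemma Dd_diff: "Dd (Suc m) x = det (mat m m (\<lambda>(i,k). (x (Suc i) gchoose Suc k) - (x i gchoose Suc k)))"
proof -
  let ?N = "Suc m"
  let ?A = "Lrow ?N * Dm ?N x"
  have A: "?A \<in> carrier_mat ?N ?N" by (rule mult_carrier_mat[OF Lrow_car Dm_car])
  have "Dd ?N x = det ?A"
    unfolding Dd_def by (subst det_mult[OF Lrow_car Dm_car]) (simp add: det_Lrow)
  also have "\<dots> = det (mat_delete ?A 0 0)"
    by (rule det_first_col[OF A]) (simp_all add: LB_entry del: index_mult_mat(1))
  also have "mat_delete ?A 0 0 = mat m m (\<lambda>(i,k). (x (Suc i) gchoose Suc k) - (x i gchoose Suc k))"
    by (rule eq_matI) (simp_all add: mat_delete_def LB_entry del: index_mult_mat(1))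
  finally show ?thesis .
qed

definition Ww :: "nat \<Rightarrow> (nat \<Rightarrow> int) \<Rightarrow> real" where
  "Ww m c = Pp m (\<lambda>i. real i - of_int (c i))"

lemma main_identity:
  assumes mono: "\<And>j. j < m \<Longrightarrow> c (Suc j) \<le> c j"
  shows "(\<Sum>\<mu>\<in>PiE {0..<m} (\<lambda>j. {c (Suc j)..c j}). Ww m \<mu>) = Ww (Suc m) c"
proof -
  have "(\<Sum>\<mu>\<in>PiE {0..<m} (\<lambda>j. {c (Suc j)..c j}). Ww m \<mu>) =
    (\<Sum>\<mu>\<in>PiE {0..<m} (\<lambda>j. {c (Suc j)..c j}). Dd m (\<lambda>i. real i - of_int (\<mu> i)))"
    unfolding Ww_def Dd_Pp ..
  also have "\<dots> = Dd (Suc m) (\<lambda>i. real i - of_int (c i))"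
    using sum_Dd[of m c, OF mono] Dd_diff[of m "\<lambda>i. real i - of_int (c i)"] by simp
  finally show ?thesis unfolding Ww_def Dd_Pp .
qed



definition Qs :: "nat \<Rightarrow> (nat \<times> nat) set" where
  "Qs n = {(i,j). 1 \<le> i \<and> i \<le> j \<and> j \<le> n}"

definition Vt :: "(nat \<Rightarrow> int) \<Rightarrow> (nat \<times> nat \<Rightarrow> int) \<Rightarrow> nat \<times> nat \<Rightarrow> int" where
  "Vt c y p = (if fst p = 0 then c (snd p) else y p)"

definition GT :: "nat \<Rightarrow> (nat \<Rightarrow> int) \<Rightarrow> (nat \<times> nat \<Rightarrow> int) set" where
  "GT n c = {y. (\<forall>p. p \<notin> Qs n \<longrightarrow> y p = 0) \<and>
     (\<forall>i j. 1 \<le> i \<longrightarrow> i \<le> j \<longrightarrow> j \<le> n \<longrightarrow> Vt c y (i-1,j) \<le> y (i,j) \<and> y (i,j) \<le> Vt c y (i-1,j-1))}"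

definition hh :: "nat \<Rightarrow> (nat \<times> nat \<Rightarrow> int) \<Rightarrow> (nat \<Rightarrow> int) \<times> (nat \<times> nat \<Rightarrow> int)" where
  "hh n y = (restrict (\<lambda>j. y (1, Suc j)) {0..<Suc n}, (\<lambda>(i,j). if (i,j) \<in> Qs n then y (Suc i, Suc j) else 0))"

definition gg :: "nat \<Rightarrow> (nat \<Rightarrow> int) \<times> (nat \<times> nat \<Rightarrow> int) \<Rightarrow> (nat \<times> nat \<Rightarrow> int)" where
  "gg n z = (\<lambda>(i,j). if (i,j) \<in> Qs (Suc n) then (if i = 1 then fst z (j - 1) else snd z (i - 1, j - 1)) else 0)"

abbreviation BB :: "nat \<Rightarrow> (nat \<Rightarrow> int) \<Rightarrow> (nat \<Rightarrow> int) set" where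
  "BB n c \<equiv> PiE {0..<Suc n} (\<lambda>j. {c (Suc j)..c j})"

lemma GT_D:
  assumes "y \<in> GT n c" "1 \<le> i" "i \<le> j" "j \<le> n"
  shows "Vt c y (i-1,j) \<le> y (i,j)" "y (i,j) \<le> Vt c y (i-1,j-1)"
  using assms unfolding GT_def by auto

lemma GT_supp: "y \<in> GT n c \<Longrightarrow> p \<notin> Qs n \<Longrightarrow> y p = 0"
  unfolding GT_def by (cases p) auto

lemma hh_in:
  assumes y: "y \<in> GT (Suc n) c"
  shows "hh n y \<in> Sigma (BB n c) (\<lambda>\<mu>. GT n \<mu>)"
proof -
  let ?\<mu> = "restrict (\<lambda>j. y (1, Suc j)) {0..<Suc n}"
  let ?y' = "(\<lambda>(i,j). if (i,j) \<in> Qs n then y (Suc i, Suc j) else 0)"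
  have m: "?\<mu> \<in> BB n c"
  proof (rule PiE_I)
    fix j assume "j \<in> {0..<Suc n}"
    hence j: "j < Suc n" by simp
    have "Vt c y (0, Suc j) \<le> y (1, Suc j)" "y (1, Suc j) \<le> Vt c y (0, j)"
      using GT_D[OF y, of 1 "Suc j"] j by auto
    thus "?\<mu> j \<in> {c (Suc j)..c j}" using j by (simp add: Vt_def)
  qed auto
  have g: "?y' \<in> GT n ?\<mu>"
    unfolding GT_def
  proof (intro CollectI conjI allI impI)
    fix p assume "p \<notin> Qs n" thus "?y' p = 0" by (cases p) auto
  next
    fix i j assume ij: "1 \<le> (i::nat)" "i \<le> j" "j \<le> n"
    have q: "(i,j) \<in> Qs n" using ij by (simp add: Qs_def)
    have a: "Vt c y (i, Suc j) \<le> y (Suc i, Suc j)" "y (Suc i, Suc j) \<le> Vt c y (i, j)"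
      using GT_D[OF y, of "Suc i" "Suc j"] ij by auto
    have l: "Vt ?\<mu> ?y' (i-1,j) = y (i, Suc j)"
    proof (cases "i = 1")
      case True thus ?thesis using ij by (simp add: Vt_def)
    next
      case False
      hence "(i-1,j) \<in> Qs n" using ij by (auto simp: Qs_def)
      thus ?thesis using False ij by (simp add: Vt_def)
    qed
    have u: "Vt ?\<mu> ?y' (i-1,j-1) = y (i, j)"
    proof (cases "i = 1")
      case True
      have "j - 1 < Suc n" "Suc (j - 1) = j" using ij by auto
      thus ?thesis using True ij by (simp add: Vt_def)
    next
      case False
      hence "(i-1,j-1) \<in> Qs n" using ij by (auto simp: Qs_def)
      thus ?thesis using False ij by (simp add: Vt_def)
    qed
    show "Vt ?\<mu> ?y' (i-1,j) \<le> ?y' (i,j)" using a l q ij by (simp add: Vt_def)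
    show "?y' (i,j) \<le> Vt ?\<mu> ?y' (i-1,j-1)" using a u q ij by (simp add: Vt_def)
  qed
  show ?thesis unfolding hh_def using m g by simp
qed

lemma gg_in:
  assumes z: "z \<in> Sigma (BB n c) (\<lambda>\<mu>. GT n \<mu>)"
  shows "gg n z \<in> GT (Suc n) c"
proof -
  obtain \<mu> y' where zz: "z = (\<mu>, y')" and m: "\<mu> \<in> BB n c" and y': "y' \<in> GT n \<mu>"
    using z by auto
  let ?Y = "gg n z"
  have Yv: "\<And>i j. ?Y (i,j) = (if (i,j) \<in> Qs (Suc n) then (if i = 1 then \<mu> (j - 1) else y' (i - 1, j - 1)) else 0)"
    unfolding gg_def zz by simp
  show ?thesis unfolding GT_def
  proof (intro CollectI conjI allI impI)
    fix p assume "p \<notin> Qs (Suc n)" thus "?Y p = 0" using Yv by (cases p) auto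
  next
    fix i j assume ij: "1 \<le> (i::nat)" "i \<le> j" "j \<le> Suc n"
    have q: "(i,j) \<in> Qs (Suc n)" using ij by (simp add: Qs_def)
    have "Vt c ?Y (i-1,j) \<le> ?Y (i,j) \<and> ?Y (i,j) \<le> Vt c ?Y (i-1,j-1)"
    proof (cases "i = 1")
      case True
      have "j - 1 \<in> {0..<Suc n}" "Suc (j - 1) = j" using ij by auto
      hence "\<mu> (j - 1) \<in> {c j..c (j-1)}" using m by (metis PiE_mem)
      thus ?thesis using True q Yv[of i j] by (simp add: Vt_def)
    next
      case False
      have c1: "1 \<le> i - 1" "i - 1 \<le> j - 1" "j - 1 \<le> n" using ij False by auto
      have a: "Vt \<mu> y' (i-1-1, j-1) \<le> y' (i-1,j-1)" "y' (i-1,j-1) \<le> Vt \<mu> y' (i-1-1,j-1-1)"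
        using GT_D[OF y' c1] by auto
      have q1: "(i-1,j) \<in> Qs (Suc n)" "(i-1,j-1) \<in> Qs (Suc n)" using ij False by (auto simp: Qs_def)
      have l: "Vt c ?Y (i-1,j) = Vt \<mu> y' (i-1-1, j-1)"
        using q1 False ij Yv[of "i-1" j] by (auto simp: Vt_def)
      have u: "Vt c ?Y (i-1,j-1) = Vt \<mu> y' (i-1-1, j-1-1)"
        using q1 False ij Yv[of "i-1" "j-1"] by (auto simp: Vt_def)
      show ?thesis using a l u q False Yv[of i j] by simp
    qed
    thus "Vt c ?Y (i-1,j) \<le> ?Y (i,j)" "?Y (i,j) \<le> Vt c ?Y (i-1,j-1)" by auto
  qed
qed

lemma hh_gg:
  assumes z: "z \<in> Sigma (BB n c) (\<lambda>\<mu>. GT n \<mu>)"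
  shows "hh n (gg n z) = z"
proof -
  obtain \<mu> y' where zz: "z = (\<mu>, y')" and m: "\<mu> \<in> BB n c" and y': "y' \<in> GT n \<mu>"
    using z by auto
  have Yv: "\<And>i j. gg n z (i,j) = (if (i,j) \<in> Qs (Suc n) then (if i = 1 then \<mu> (j - 1) else y' (i - 1, j - 1)) else 0)"
    unfolding gg_def zz by simp
  have 1: "restrict (\<lambda>j. gg n z (1, Suc j)) {0..<Suc n} = \<mu>"
  proof (rule ext)
    fix j show "restrict (\<lambda>j. gg n z (1, Suc j)) {0..<Suc n} j = \<mu> j"
      using m Yv[of 1 "Suc j"] by (cases "j < Suc n") (auto simp: Qs_def PiE_def extensional_def)
  qed
  have 2: "(\<lambda>(i,j). if (i,j) \<in> Qs n then gg n z (Suc i, Suc j) else 0) = y'"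
  proof (rule ext)
    fix p show "(\<lambda>(i,j). if (i,j) \<in> Qs n then gg n z (Suc i, Suc j) else 0) p = y' p"
    proof (cases p)
      case (Pair i j)
      show ?thesis
      proof (cases "(i,j) \<in> Qs n")
        case True
        hence "(Suc i, Suc j) \<in> Qs (Suc n)" "Suc i \<noteq> 1" by (auto simp: Qs_def)
        thus ?thesis using Pair True Yv[of "Suc i" "Suc j"] by simp
      next
        case False thus ?thesis using Pair GT_supp[OF y' False] by simp
      qed
    qed
  qed
  show ?thesis unfolding hh_def using 1 2 zz by simp
qed

lemma gg_hh:
  assumes y: "y \<in> GT (Suc n) c"
  shows "gg n (hh n y) = y"
proof (rule ext)
  fix p show "gg n (hh n y) p = y p"
  proof (cases p)
    case (Pair i j)
    show ?thesis
    proof (cases "(i,j) \<in> Qs (Suc n)")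
      case False thus ?thesis using Pair GT_supp[OF y False] by (simp add: gg_def)
    next
      case True
      show ?thesis
      proof (cases "i = 1")
        case True': True
        have "j - 1 < Suc n" "Suc (j - 1) = j" using True True' by (auto simp: Qs_def)
        thus ?thesis using Pair True True' by (simp add: gg_def hh_def)
      next
        case False
        have "(i - 1, j - 1) \<in> Qs n" "Suc (i - 1) = i" "Suc (j - 1) = j" using True False by (auto simp: Qs_def)
        thus ?thesis using Pair True False by (simp add: gg_def hh_def)
      qed
    qed
  qed
qed

lemma GT_bij: "bij_betw (gg n) (Sigma (BB n c) (\<lambda>\<mu>. GT n \<mu>)) (GT (Suc n) c)"
proof (rule bij_betw_byWitness[where f' = "hh n"])
  show "\<forall>a\<in>Sigma (BB n c) (\<lambda>\<mu>. GT n \<mu>). hh n (gg n a) = a" using hh_gg by blast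
  show "\<forall>a'\<in>GT (Suc n) c. gg n (hh n a') = a'" using gg_hh by blast
  show "gg n ` Sigma (BB n c) (\<lambda>\<mu>. GT n \<mu>) \<subseteq> GT (Suc n) c" using gg_in by blast
  show "hh n ` GT (Suc n) c \<subseteq> Sigma (BB n c) (\<lambda>\<mu>. GT n \<mu>)" using hh_in by blast
qed

lemma GT_0: "GT 0 c = {\<lambda>_. 0}"
proof -
  have Q: "Qs 0 = {}" by (auto simp: Qs_def)
  show ?thesis unfolding GT_def Q by auto
qed

theorem GT_card:
  assumes "\<And>j. j < n \<Longrightarrow> c (Suc j) \<le> c j"
  shows "finite (GT n c) \<and> real (card (GT n c)) = Ww (Suc n) c"
  using assms
proof (induct n arbitrary: c)
  case 0
  have "Ww (Suc 0) c = 1" unfolding Ww_def Pp_def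
    by (rule prod.neutral) auto
  thus ?case by (simp add: GT_0)
next
  case (Suc n)
  have IH: "\<And>\<mu>. \<mu> \<in> BB n c \<Longrightarrow> finite (GT n \<mu>) \<and> real (card (GT n \<mu>)) = Ww (Suc n) \<mu>"
  proof -
    fix \<mu> assume m: "\<mu> \<in> BB n c"
    show "finite (GT n \<mu>) \<and> real (card (GT n \<mu>)) = Ww (Suc n) \<mu>"
    proof (rule Suc.hyps)
      fix j assume j: "j < n"
      have "\<mu> (Suc j) \<in> {c (Suc (Suc j))..c (Suc j)}" "\<mu> j \<in> {c (Suc j)..c j}"
        using m j by (auto simp: PiE_def Pi_def)
      thus "\<mu> (Suc j) \<le> \<mu> j" by auto
    qed
  qed
  have finB: "finite (BB n c)" by (rule finite_PiE) auto
  have finS: "finite (Sigma (BB n c) (\<lambda>\<mu>. GT n \<mu>))"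
    using finB IH by (intro finite_SigmaI) auto
  have b: "bij_betw (gg n) (Sigma (BB n c) (\<lambda>\<mu>. GT n \<mu>)) (GT (Suc n) c)" by (rule GT_bij)
  have fin: "finite (GT (Suc n) c)" using bij_betw_finite[OF b] finS by simp
  have "card (GT (Suc n) c) = card (Sigma (BB n c) (\<lambda>\<mu>. GT n \<mu>))" using bij_betw_same_card[OF b] by simp
  also have "\<dots> = (\<Sum>\<mu>\<in>BB n c. card (GT n \<mu>))" using finB IH by (intro card_SigmaI) auto
  finally have "real (card (GT (Suc n) c)) = (\<Sum>\<mu>\<in>BB n c. real (card (GT n \<mu>)))" by simp
  also have "\<dots> = (\<Sum>\<mu>\<in>BB n c. Ww (Suc n) \<mu>)" using IH by (intro sum.cong) auto
  also have "\<dots> = Ww (Suc (Suc n)) c" by (rule main_identity) (use Suc.prems in auto)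
  finally show ?case using fin by simp
qed



abbreviation cl :: "(nat \<Rightarrow> nat) \<Rightarrow> nat \<Rightarrow> int" where "cl lam \<equiv> (\<lambda>j. int (lam j))"

definition Mx :: "nat \<Rightarrow> (nat \<Rightarrow> nat) \<Rightarrow> (nat \<times> nat \<Rightarrow> int) \<Rightarrow> nat \<times> nat \<Rightarrow> int" where
  "Mx n lam y p = (if snd p < n then max (Vt (cl lam) y (fst p - 1, snd p)) (Vt (cl lam) y (Suc (fst p), Suc (snd p)))
     else Vt (cl lam) y (fst p - 1, snd p))"

definition Phi :: "(nat \<times> nat) set \<Rightarrow> (nat \<times> nat) set \<Rightarrow> nat \<Rightarrow> (nat \<Rightarrow> nat) \<Rightarrow> (nat \<times> nat \<Rightarrow> int) \<Rightarrow> nat \<times> nat \<Rightarrow> int" where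
  "Phi U1 U2 n lam y p = (if p \<in> U1 then y p else if p \<in> U2 then y p - Mx n lam y p else 0)"

function psi :: "nat \<Rightarrow> (nat \<times> nat) set \<Rightarrow> (nat \<Rightarrow> nat) \<Rightarrow> (nat \<times> nat \<Rightarrow> int) \<Rightarrow> nat \<times> nat \<Rightarrow> int" where
  "psi n U2 lam x (i,j) = (if 1 \<le> i \<and> i \<le> j \<and> j \<le> n then
     (if (i,j) \<in> U2 then x (i,j) +
        (if j < n then max (if i - 1 = 0 then int (lam j) else psi n U2 lam x (i-1,j)) (psi n U2 lam x (Suc i, Suc j))
         else (if i - 1 = 0 then int (lam j) else psi n U2 lam x (i-1,j)))
      else x (i,j)) else 0)"
  by pat_completeness auto
termination
  by (relation "measure (\<lambda>(n,U2,lam,x,p). 2*n + fst p - 2 * snd p)") auto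

declare psi.simps[simp del]

lemma psi_eq:
  assumes "(i,j) \<in> Qs n" "(i,j) \<in> U2"
  shows "psi n U2 lam x (i,j) = x (i,j) + Mx n lam (psi n U2 lam x) (i,j)"
  using assms by (subst psi.simps) (auto simp: Qs_def Mx_def Vt_def)

lemma psi_U1:
  assumes "(i,j) \<in> Qs n" "(i,j) \<notin> U2"
  shows "psi n U2 lam x (i,j) = x (i,j)"
  using assms by (subst psi.simps) (auto simp: Qs_def)

lemma psi_out:
  assumes "p \<notin> Qs n"
  shows "psi n U2 lam x p = 0"
proof -
  obtain i j where p: "p = (i,j)" by (cases p)
  show ?thesis using assms unfolding p by (subst psi.simps) (auto simp: Qs_def)
qed

lemma PA: "Pn n - An n = Qs n"
  unfolding Pn_def An_def Qs_def by auto

lemma cover_lower: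
  assumes "cover n c (i,j)"
  shows "(1 \<le> i \<and> i \<le> j \<and> j \<le> n \<and> c = (i-1,j)) \<or> (i \<le> j \<and> j < n \<and> c = (Suc i, Suc j))"
  using assms unfolding cover_def
proof (elim exE conjE disjE)
  fix i' j' assume h: "1 \<le> i'" "i' \<le> j'" "j' \<le> n" "c = (i', j')" "(i, j) = (i' - 1, j' - 1)"
  hence "i' = Suc i" "j' = Suc j" by auto
  thus ?thesis using h by auto
qed auto

lemma cover_Pn: "cover n q p \<Longrightarrow> q \<in> Pn n \<and> p \<in> Pn n"
  unfolding cover_def Pn_def by auto

lemma cover_not_AA: "cover n q p \<Longrightarrow> fst q = 0 \<Longrightarrow> fst p = 0 \<Longrightarrow> False"
  unfolding cover_def by auto

lemma cover1: "1 \<le> i \<Longrightarrow> i \<le> j \<Longrightarrow> j \<le> n \<Longrightarrow> cover n (i-1,j) (i,j)"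
  unfolding cover_def by auto

lemma cover2: "1 \<le> i \<Longrightarrow> i \<le> j \<Longrightarrow> j \<le> n \<Longrightarrow> cover n (i,j) (i-1,j-1)"
  unfolding cover_def by blast

lemma cover2': "i \<le> j \<Longrightarrow> j < n \<Longrightarrow> cover n (Suc i, Suc j) (i,j)"
  using cover2[of "Suc i" "Suc j" n] by simp

lemma prec_last: "prec n q p \<Longrightarrow> \<exists>c. cover n c p \<and> (c = q \<or> prec n q c)"
  unfolding prec_def by (induct rule: tranclp_induct) blast+

lemma cover_prec: "cover n q p \<Longrightarrow> prec n q p"
  unfolding prec_def by auto

lemma prec_trans: "prec n a b \<Longrightarrow> prec n b c \<Longrightarrow> prec n a c"
  unfolding prec_def by auto

lemma prec_Pn: "prec n q p \<Longrightarrow> q \<in> Pn n \<and> p \<in> Pn n"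
  unfolding prec_def by (induct rule: tranclp_induct) (auto dest: cover_Pn)

lemma prec_bottom: "1 \<le> i \<Longrightarrow> i \<le> j \<Longrightarrow> j \<le> n \<Longrightarrow> prec n (0,j) (i,j)"
proof (induct i)
  case 0 thus ?case by simp
next
  case (Suc i)
  have c: "cover n (i, j) (Suc i, j)" using cover1[of "Suc i" j n] Suc by auto
  show ?case
  proof (cases "i = 0")
    case True thus ?thesis using c by (auto intro: cover_prec)
  next
    case False thus ?thesis using Suc c by (auto intro: prec_trans cover_prec)
  qed
qed

lemma Pn_cases: "p \<in> Pn n \<Longrightarrow> (fst p = 0 \<Longrightarrow> p \<in> An n \<Longrightarrow> P) \<Longrightarrow> (fst p \<noteq> 0 \<Longrightarrow> p \<in> Qs n \<Longrightarrow> P) \<Longrightarrow> P"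
  unfolding Pn_def An_def Qs_def by (cases p) auto

lemma An_fst: "p \<in> An n \<Longrightarrow> fst p = 0"
  unfolding An_def by auto

lemma Qs_fst: "p \<in> Qs n \<Longrightarrow> fst p \<noteq> 0"
  unfolding Qs_def by auto

lemma GT_cover_mono:
  assumes y: "y \<in> GT n c" and cv: "cover n q p"
  shows "Vt c y q \<le> Vt c y p"
  using cv unfolding cover_def
proof (elim exE conjE disjE)
  fix i j assume h: "1 \<le> i" "i \<le> j" "j \<le> n" "q = (i - 1, j)" "p = (i, j)"
  thus ?thesis using GT_D(1)[OF y h(1-3)] by (simp add: Vt_def)
next
  fix i j assume h: "1 \<le> i" "i \<le> j" "j \<le> n" "q = (i, j)" "p = (i - 1, j - 1)"
  thus ?thesis using GT_D(2)[OF y h(1-3)] by (simp add: Vt_def)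
qed

lemma GT_prec_mono:
  assumes y: "y \<in> GT n c" and pr: "prec n q p"
  shows "Vt c y q \<le> Vt c y p"
  using pr unfolding prec_def
proof (induct rule: tranclp_induct)
  case (base p) thus ?case using GT_cover_mono[OF y] by blast
next
  case (step p r) thus ?case using GT_cover_mono[OF y, of p r] by simp
qed

lemma Mx_ge:
  assumes "cover n q p"
  shows "Vt (cl lam) y q \<le> Mx n lam y p"
proof -
  obtain i j where p: "p = (i,j)" by (cases p)
  show ?thesis using cover_lower[of n q i j] assms unfolding p Mx_def by auto
qed

lemma Mx_attained:
  assumes "p \<in> Qs n"
  shows "\<exists>c. cover n c p \<and> Mx n lam y p = Vt (cl lam) y c"
proof -
  obtain i j where p: "p = (i,j)" and h: "1 \<le> i" "i \<le> j" "j \<le> n" using assms by (auto simp: Qs_def)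
  have c1: "cover n (i-1,j) (i,j)" by (rule cover1[OF h])
  show ?thesis
  proof (cases "j < n")
    case True
    have c2: "cover n (Suc i, Suc j) (i,j)" by (rule cover2'[OF h(2) True])
    show ?thesis using c1 c2 True unfolding p Mx_def by (cases "Vt (cl lam) y (i - 1, j) \<le> Vt (cl lam) y (Suc i, Suc j)") (auto simp: max_def)
  next
    case False thus ?thesis using c1 unfolding p Mx_def by auto
  qed
qed

lemma adm_facts:
  assumes "admissible n U1 U2"
  shows "U1 \<inter> U2 = {}" "U1 \<union> U2 = Qs n" "U1 \<subseteq> Qs n" "U2 \<subseteq> Qs n"
    "\<And>u1 u2. u1 \<in> U1 \<Longrightarrow> u2 \<in> U2 \<Longrightarrow> \<not> prec n u1 u2"
  using assms unfolding admissible_def PA by auto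

lemma Vt_Qs: "p \<in> Qs n \<Longrightarrow> Vt c y p = y p"
  unfolding Vt_def by (auto dest: Qs_fst)

lemma Vt_An: "p \<in> An n \<Longrightarrow> Vt c y p = c (snd p)"
  unfolding Vt_def by (auto dest: An_fst)

lemma K_lemma:
  assumes y: "y \<in> GT n (cl lam)" and adm: "admissible n U1 U2" and p: "p \<in> U2" and pr: "prec n q p"
  shows "Phi U1 U2 n lam y p \<le> Vt (cl lam) y p - Vt (cl lam) y q"
proof -
  note A = adm_facts[OF adm]
  obtain c where c: "cover n c p" "c = q \<or> prec n q c" using prec_last[OF pr] by blast
  have "Vt (cl lam) y q \<le> Vt (cl lam) y c" using c(2) GT_prec_mono[OF y, of q c] by auto
  also have "\<dots> \<le> Mx n lam y p" by (rule Mx_ge[OF c(1)])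
  finally have "Vt (cl lam) y q \<le> Mx n lam y p" .
  moreover have "p \<notin> U1" using p A(1) by auto
  moreover have "Vt (cl lam) y p = y p" using p A(4) by (auto intro: Vt_Qs)
  ultimately show ?thesis using p unfolding Phi_def by simp
qed

lemma tele:
  assumes y: "y \<in> GT n (cl lam)" and adm: "admissible n U1 U2"
  shows "ps \<noteq> [] \<Longrightarrow> set ps \<subseteq> U2 \<Longrightarrow> sorted_wrt (\<lambda>u v. prec n v u) ps \<Longrightarrow> prec n b (last ps) \<Longrightarrow>
    sum_list (map (Phi U1 U2 n lam y) ps) \<le> Vt (cl lam) y (hd ps) - Vt (cl lam) y b"
proof (induct ps)
  case Nil thus ?case by simp
next
  case (Cons p rest)
  show ?case
  proof (cases "rest = []")
    case True thus ?thesis using Cons.prems K_lemma[OF y adm, of p b] by simp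
  next
    case False
    have h: "hd rest \<in> set rest" using False by simp
    have pr: "prec n (hd rest) p" using Cons.prems(3) h by simp
    have IH: "sum_list (map (Phi U1 U2 n lam y) rest) \<le> Vt (cl lam) y (hd rest) - Vt (cl lam) y b"
      using Cons False by simp
    have "Phi U1 U2 n lam y p \<le> Vt (cl lam) y p - Vt (cl lam) y (hd rest)"
      using K_lemma[OF y adm _ pr] Cons.prems(2) by simp
    thus ?thesis using IH by simp
  qed
qed

lemma lamx_Vt: "lamx lam x q = Vt (cl lam) x q"
  unfolding lamx_def Vt_def by simp

lemma Phi_U1: "p \<in> U1 \<Longrightarrow> Phi U1 U2 n lam y p = y p"
  unfolding Phi_def by simp

lemma lamx_Phi:
  assumes adm: "admissible n U1 U2" and a: "a \<in> An n \<union> U1"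
  shows "lamx lam (Phi U1 U2 n lam y) a = Vt (cl lam) y a"
  using a adm_facts[OF adm] unfolding lamx_Vt Vt_def Phi_def by (auto dest: An_fst Qs_fst)

lemma Phi_in:
  assumes y: "y \<in> GT n (cl lam)" and adm: "admissible n U1 U2"
  shows "in_CO n U1 U2 lam (Phi U1 U2 n lam y)"
proof -
  note A = adm_facts[OF adm]
  let ?x = "Phi U1 U2 n lam y"
  let ?V = "Vt (cl lam) y"
  have c1: "\<forall>p. p \<notin> Pn n - An n \<longrightarrow> ?x p = 0"
    using A unfolding PA Phi_def by auto
  have c2: "\<forall>p\<in>U1. \<forall>a\<in>An n. prec n p a \<longrightarrow> ?x p \<le> of_nat (lam (snd a))"
  proof (intro ballI impI)
    fix p a assume h: "p \<in> U1" "a \<in> An n" "prec n p a"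
    have "?V p \<le> ?V a" by (rule GT_prec_mono[OF y h(3)])
    moreover have "p \<in> Qs n" using h A(3) by auto
    ultimately show "?x p \<le> of_nat (lam (snd a))" using h by (simp add: Phi_U1 Vt_Qs Vt_An)
  qed
  have c3: "\<forall>q\<in>U1. \<forall>b\<in>An n. prec n b q \<longrightarrow> of_nat (lam (snd b)) \<le> ?x q"
  proof (intro ballI impI)
    fix q b assume h: "q \<in> U1" "b \<in> An n" "prec n b q"
    have "?V b \<le> ?V q" by (rule GT_prec_mono[OF y h(3)])
    moreover have "q \<in> Qs n" using h A(3) by auto
    ultimately show "of_nat (lam (snd b)) \<le> ?x q" using h by (simp add: Phi_U1 Vt_Qs Vt_An)
  qed
  have c4: "\<forall>p\<in>U1. \<forall>q\<in>U1. prec n p q \<longrightarrow> ?x p \<le> ?x q"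
  proof (intro ballI impI)
    fix p q assume h: "p \<in> U1" "q \<in> U1" "prec n p q"
    have "?V p \<le> ?V q" by (rule GT_prec_mono[OF y h(3)])
    moreover have "p \<in> Qs n" "q \<in> Qs n" using h A(3) by auto
    ultimately show "?x p \<le> ?x q" using h by (simp add: Phi_U1 Vt_Qs)
  qed
  have c5: "\<forall>p\<in>U2. 0 \<le> ?x p"
  proof
    fix p assume p: "p \<in> U2"
    have pQ: "p \<in> Qs n" using p A(4) by auto
    obtain c where c: "cover n c p" "Mx n lam y p = ?V c" using Mx_attained[OF pQ] by blast
    have "?V c \<le> ?V p" by (rule GT_cover_mono[OF y c(1)])
    moreover have "p \<notin> U1" using p A(1) by auto
    ultimately show "0 \<le> ?x p" using p c(2) Vt_Qs[OF pQ] unfolding Phi_def by simp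
  qed
  have c6: "\<forall>a\<in>An n \<union> U1. \<forall>b\<in>An n \<union> U1. \<forall>ps. ps \<noteq> [] \<and> set ps \<subseteq> U2 \<and>
         sorted_wrt (\<lambda>u v. prec n v u) ps \<and> prec n (hd ps) a \<and> prec n b (last ps)
         \<longrightarrow> sum_list (map ?x ps) \<le> lamx lam ?x a - lamx lam ?x b"
  proof (intro ballI allI impI)
    fix a b ps assume ab: "a \<in> An n \<union> U1" "b \<in> An n \<union> U1" and
      h: "ps \<noteq> [] \<and> set ps \<subseteq> U2 \<and> sorted_wrt (\<lambda>u v. prec n v u) ps \<and> prec n (hd ps) a \<and> prec n b (last ps)"
    have "sum_list (map ?x ps) \<le> ?V (hd ps) - ?V b" using tele[OF y adm] h by blast
    moreover have "?V (hd ps) \<le> ?V a" using GT_prec_mono[OF y] h by blast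
    ultimately show "sum_list (map ?x ps) \<le> lamx lam ?x a - lamx lam ?x b"
      using lamx_Phi[OF adm ab(1)] lamx_Phi[OF adm ab(2)] by simp
  qed
  have c7: "\<forall>q\<in>U1. \<forall>ps. ps \<noteq> [] \<and> set ps \<subseteq> U2 \<and>
         sorted_wrt (prec n) ps \<and> prec n (last ps) q
         \<longrightarrow> sum_list (map ?x ps) \<le> ?x q"
  proof (intro ballI allI impI)
    fix q ps assume q: "q \<in> U1" and h: "ps \<noteq> [] \<and> set ps \<subseteq> U2 \<and> sorted_wrt (prec n) ps \<and> prec n (last ps) q"
    have "hd ps \<in> Qs n" using h A(4) by (auto intro: hd_in_set)
    then obtain i j where hd: "hd ps = (i,j)" and ij: "1 \<le> i" "i \<le> j" "j \<le> n" by (auto simp: Qs_def)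
    have pb: "prec n (0,j) (hd ps)" unfolding hd by (rule prec_bottom[OF ij])
    have r: "rev ps \<noteq> []" "set (rev ps) \<subseteq> U2" "sorted_wrt (\<lambda>u v. prec n v u) (rev ps)"
      "prec n (0,j) (last (rev ps))"
      using h pb by (auto simp: sorted_wrt_rev last_rev)
    have "sum_list (map ?x (rev ps)) \<le> ?V (hd (rev ps)) - ?V (0,j)"
      by (rule tele[OF y adm r])
    moreover have "sum_list (map ?x (rev ps)) = sum_list (map ?x ps)"
      by (simp add: rev_map[symmetric])
    moreover have "hd (rev ps) = last ps" using h by (simp add: hd_rev)
    moreover have "?V (last ps) \<le> ?V q" using GT_prec_mono[OF y] h by blast
    moreover have "?V (0,j) \<ge> 0" by (simp add: Vt_def)
    moreover have "?V q = ?x q" using q A(3) by (auto simp: Phi_U1 Vt_Qs)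
    ultimately show "sum_list (map ?x ps) \<le> ?x q" by simp
  qed
  show ?thesis unfolding in_CO_def using c1 c2 c3 c4 c5 c6 c7 by blast
qed

lemma Phi_inj:
  assumes y1: "y1 \<in> GT n (cl lam)" and y2: "y2 \<in> GT n (cl lam)" and adm: "admissible n U1 U2"
    and eq: "Phi U1 U2 n lam y1 = Phi U1 U2 n lam y2"
  shows "y1 = y2"
proof -
  note A = adm_facts[OF adm]
  have main: "\<And>m. \<forall>p. p \<in> Qs n \<longrightarrow> 2*n + fst p - 2*snd p = m \<longrightarrow> y1 p = y2 p"
  proof -
    fix m show "\<forall>p. p \<in> Qs n \<longrightarrow> 2*n + fst p - 2*snd p = m \<longrightarrow> y1 p = y2 p"
    proof (induct m rule: less_induct)
      case (less m)
      show ?case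
      proof (intro allI impI)
        fix p assume pQ: "p \<in> Qs n" and pm: "2*n + fst p - 2*snd p = m"
        obtain i j where p: "p = (i,j)" and ij: "1 \<le> i" "i \<le> j" "j \<le> n" using pQ by (auto simp: Qs_def)
        have v1: "Vt (cl lam) y1 (i-1,j) = Vt (cl lam) y2 (i-1,j)"
        proof (cases "i - 1 = 0")
          case True thus ?thesis by (simp add: Vt_def)
        next
          case False
          have q: "(i-1,j) \<in> Qs n" using False ij by (auto simp: Qs_def)
          have "2*n + (i-1) - 2*j < m" using pm p ij False by auto
          hence "y1 (i-1,j) = y2 (i-1,j)" using less q by force
          thus ?thesis by (simp add: Vt_def)
        qed
        have v2: "j < n \<Longrightarrow> Vt (cl lam) y1 (Suc i, Suc j) = Vt (cl lam) y2 (Suc i, Suc j)"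
        proof -
          assume jn: "j < n"
          have q: "(Suc i, Suc j) \<in> Qs n" using jn ij by (auto simp: Qs_def)
          have "2*n + Suc i - 2*Suc j < m" using pm p ij jn by auto
          hence "y1 (Suc i, Suc j) = y2 (Suc i, Suc j)" using less q by force
          thus ?thesis by (simp add: Vt_def)
        qed
        have M: "Mx n lam y1 p = Mx n lam y2 p" unfolding Mx_def p using v1 v2 by simp
        have e: "Phi U1 U2 n lam y1 p = Phi U1 U2 n lam y2 p" using eq by simp
        show "y1 p = y2 p"
        proof (cases "p \<in> U1")
          case True thus ?thesis using e by (simp add: Phi_U1)
        next
          case False
          hence "p \<in> U2" using A(2) pQ by auto
          thus ?thesis using e M False unfolding Phi_def by simp
        qed
      qed
    qed
  qed
  show ?thesis
  proof (rule ext)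
    fix p show "y1 p = y2 p"
    proof (cases "p \<in> Qs n")
      case True thus ?thesis using main by blast
    next
      case False thus ?thesis using GT_supp[OF y1 False] GT_supp[OF y2 False] by simp
    qed
  qed
qed

lemma CO_D:
  assumes "in_CO n U1 U2 lam x"
  shows "\<And>p. p \<notin> Pn n - An n \<Longrightarrow> x p = 0"
    "\<And>p a. p \<in> U1 \<Longrightarrow> a \<in> An n \<Longrightarrow> prec n p a \<Longrightarrow> x p \<le> of_nat (lam (snd a))"
    "\<And>q b. q \<in> U1 \<Longrightarrow> b \<in> An n \<Longrightarrow> prec n b q \<Longrightarrow> of_nat (lam (snd b)) \<le> x q"
    "\<And>p q. p \<in> U1 \<Longrightarrow> q \<in> U1 \<Longrightarrow> prec n p q \<Longrightarrow> x p \<le> x q"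
    "\<And>p. p \<in> U2 \<Longrightarrow> 0 \<le> x p"
    "\<And>a b ps. a \<in> An n \<union> U1 \<Longrightarrow> b \<in> An n \<union> U1 \<Longrightarrow> ps \<noteq> [] \<Longrightarrow> set ps \<subseteq> U2 \<Longrightarrow>
         sorted_wrt (\<lambda>u v. prec n v u) ps \<Longrightarrow> prec n (hd ps) a \<Longrightarrow> prec n b (last ps)
         \<Longrightarrow> sum_list (map x ps) \<le> lamx lam x a - lamx lam x b"
proof -
  note h = assms[unfolded in_CO_def]
  note h1 = h[THEN conjunct1] and h2 = h[THEN conjunct2, THEN conjunct1]
    and h3 = h[THEN conjunct2, THEN conjunct2, THEN conjunct1]
    and h4 = h[THEN conjunct2, THEN conjunct2, THEN conjunct2, THEN conjunct1]
    and h5 = h[THEN conjunct2, THEN conjunct2, THEN conjunct2, THEN conjunct2, THEN conjunct1]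
    and h6 = h[THEN conjunct2, THEN conjunct2, THEN conjunct2, THEN conjunct2, THEN conjunct2, THEN conjunct1]
  show "\<And>p. p \<notin> Pn n - An n \<Longrightarrow> x p = 0" using h1 by blast
  show "\<And>p a. p \<in> U1 \<Longrightarrow> a \<in> An n \<Longrightarrow> prec n p a \<Longrightarrow> x p \<le> of_nat (lam (snd a))" using h2 by blast
  show "\<And>q b. q \<in> U1 \<Longrightarrow> b \<in> An n \<Longrightarrow> prec n b q \<Longrightarrow> of_nat (lam (snd b)) \<le> x q" using h3 by blast
  show "\<And>p q. p \<in> U1 \<Longrightarrow> q \<in> U1 \<Longrightarrow> prec n p q \<Longrightarrow> x p \<le> x q" using h4 by blast
  show "\<And>p. p \<in> U2 \<Longrightarrow> 0 \<le> x p" using h5 by blast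
  fix a b ps assume "a \<in> An n \<union> U1" "b \<in> An n \<union> U1" "ps \<noteq> []" "set ps \<subseteq> U2"
         "sorted_wrt (\<lambda>u v. prec n v u) ps" "prec n (hd ps) a" "prec n b (last ps)"
  thus "sum_list (map x ps) \<le> lamx lam x a - lamx lam x b" using h6 by blast
qed

lemma chain_psi:
  assumes adm: "admissible n U1 U2" and x: "in_CO n U1 U2 lam x"
  shows "q \<in> U2 \<Longrightarrow> \<exists>ps b. ps \<noteq> [] \<and> set ps \<subseteq> U2 \<and> sorted_wrt (\<lambda>u v. prec n v u) ps \<and> hd ps = q \<and>
     b \<in> An n \<and> prec n b (last ps) \<and> Vt (cl lam) (psi n U2 lam x) q = int (lam (snd b)) + sum_list (map x ps)"
proof (induct "2*n + fst q - 2*snd q" arbitrary: q rule: less_induct)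
  case less
  note A = adm_facts[OF adm]
  let ?y = "psi n U2 lam x"
  have qQ: "q \<in> Qs n" using less.prems A(4) by auto
  obtain i j where q: "q = (i,j)" using prod.exhaust by blast
  have yq: "Vt (cl lam) ?y q = x q + Mx n lam ?y q"
    using psi_eq[of i j n U2 lam x] qQ less.prems Vt_Qs[OF qQ] q by simp
  obtain c where c: "cover n c q" "Mx n lam ?y q = Vt (cl lam) ?y c" using Mx_attained[OF qQ] by blast
  have cP: "c \<in> Pn n" using cover_Pn[OF c(1)] by simp
  show ?case
  proof (rule Pn_cases[OF cP])
    assume "c \<in> An n"
    hence "Vt (cl lam) ?y c = int (lam (snd c))" by (rule Vt_An)
    thus ?thesis using yq c less.prems \<open>c \<in> An n\<close> by (intro exI[of _ "[q]"] exI[of _ c]) (auto intro: cover_prec)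
  next
    assume cQ: "c \<in> Qs n"
    have cU2: "c \<in> U2"
    proof (rule ccontr)
      assume "c \<notin> U2"
      hence "c \<in> U1" using cQ A(2) by auto
      thus False using A(5)[OF _ less.prems] cover_prec[OF c(1)] by blast
    qed
    have mu: "2*n + fst c - 2*snd c < 2*n + fst q - 2*snd q"
      using cover_lower[of n c i j] c(1) q qQ cQ by (auto simp: Qs_def)
    obtain ps b where h: "ps \<noteq> []" "set ps \<subseteq> U2" "sorted_wrt (\<lambda>u v. prec n v u) ps" "hd ps = c"
      "b \<in> An n" "prec n b (last ps)" "Vt (cl lam) ?y c = int (lam (snd b)) + sum_list (map x ps)"
      using less.hyps[OF mu cU2] by blast
    have all: "\<forall>v\<in>set ps. prec n v q"
    proof
      fix v assume v: "v \<in> set ps"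
      obtain rest where ps: "ps = c # rest" using h(1) h(4) by (cases ps) auto
      show "prec n v q"
      proof (cases "v = c")
        case True thus ?thesis using cover_prec[OF c(1)] by simp
      next
        case False
        hence "prec n v c" using v h(3) ps by auto
        thus ?thesis using cover_prec[OF c(1)] by (rule prec_trans)
      qed
    qed
    show ?thesis
      using h all yq c less.prems by (intro exI[of _ "q # ps"] exI[of _ b]) auto
  qed
qed

lemma psi_cover_mono:
  assumes adm: "admissible n U1 U2" and x: "in_CO n U1 U2 lam x" and cv: "cover n q p"
  shows "Vt (cl lam) (psi n U2 lam x) q \<le> Vt (cl lam) (psi n U2 lam x) p"
proof -
  note A = adm_facts[OF adm]
  note C = CO_D[OF x]
  let ?y = "psi n U2 lam x"
  let ?V = "Vt (cl lam) ?y"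
  have pP: "p \<in> Pn n" and qP: "q \<in> Pn n" using cover_Pn[OF cv] by auto
  have yU1: "\<And>r. r \<in> U1 \<Longrightarrow> ?V r = x r"
  proof -
    fix r assume r: "r \<in> U1"
    hence rQ: "r \<in> Qs n" and "r \<notin> U2" using A by auto
    thus "?V r = x r" using psi_U1[of "fst r" "snd r" n U2 lam x] Vt_Qs[OF rQ] by simp
  qed
  show ?thesis
  proof (cases "p \<in> U2")
    case True
    hence pQ: "p \<in> Qs n" using A by auto
    have "?V p = x p + Mx n lam ?y p"
      using psi_eq[of "fst p" "snd p" n U2 lam x] pQ True Vt_Qs[OF pQ] by simp
    moreover have "?V q \<le> Mx n lam ?y p" by (rule Mx_ge[OF cv])
    moreover have "0 \<le> x p" using C(5) True by simp
    ultimately show ?thesis by simp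
  next
    case False
    have pA1: "p \<in> An n \<union> U1"
      using pP A(2) False by (auto elim: Pn_cases)
    have Vp: "?V p = lamx lam x p"
    proof (cases "p \<in> An n")
      case True thus ?thesis unfolding lamx_Vt using Vt_An[OF True] by simp
    next
      case False
      hence pU1: "p \<in> U1" using pA1 by auto
      hence pQ: "p \<in> Qs n" using A by auto
      show ?thesis unfolding lamx_Vt using yU1[OF pU1] Vt_Qs[OF pQ] by simp
    qed
    show ?thesis
    proof (rule Pn_cases[OF qP])
      assume qA: "q \<in> An n"
      have "p \<notin> An n" using cover_not_AA[OF cv An_fst[OF qA]] An_fst by metis
      hence pU1: "p \<in> U1" using pA1 by blast
      show ?thesis using C(3)[OF pU1 qA cover_prec[OF cv]] yU1[OF pU1] Vt_An[OF qA] by simp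
    next
      assume qQ: "q \<in> Qs n"
      show ?thesis
      proof (cases "q \<in> U1")
        case True
        show ?thesis
        proof (cases "p \<in> U1")
          case True': True
          thus ?thesis using C(4)[OF True True' cover_prec[OF cv]] yU1 True by simp
        next
          case False
          hence pA: "p \<in> An n" using pA1 by auto
          thus ?thesis using C(2)[OF True pA cover_prec[OF cv]] yU1[OF True] Vt_An[OF pA] by simp
        qed
      next
        case False
        hence qU2: "q \<in> U2" using qQ A(2) by auto
        obtain ps b where h: "ps \<noteq> []" "set ps \<subseteq> U2" "sorted_wrt (\<lambda>u v. prec n v u) ps" "hd ps = q"
          "b \<in> An n" "prec n b (last ps)" "?V q = int (lam (snd b)) + sum_list (map x ps)"
          using chain_psi[OF adm x qU2] by blast
        have "sum_list (map x ps) \<le> lamx lam x p - lamx lam x b"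
          using C(6)[OF pA1 _ h(1-3) _ h(6)] h(4,5) cover_prec[OF cv] by blast
        moreover have "lamx lam x b = int (lam (snd b))" using h(5) unfolding lamx_def by (auto dest: An_fst)
        ultimately show ?thesis using h(7) Vp by simp
      qed
    qed
  qed
qed

lemma psi_in:
  assumes adm: "admissible n U1 U2" and x: "in_CO n U1 U2 lam x"
  shows "psi n U2 lam x \<in> GT n (cl lam)"
  unfolding GT_def
proof (intro CollectI conjI allI impI)
  fix p assume "p \<notin> Qs n" thus "psi n U2 lam x p = 0" by (rule psi_out)
next
  fix i j assume ij: "1 \<le> (i::nat)" "i \<le> j" "j \<le> n"
  have q: "(i,j) \<in> Qs n" using ij by (simp add: Qs_def)
  show "Vt (cl lam) (psi n U2 lam x) (i-1,j) \<le> psi n U2 lam x (i,j)"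
    using psi_cover_mono[OF adm x cover1[OF ij]] Vt_Qs[OF q] by simp
  show "psi n U2 lam x (i,j) \<le> Vt (cl lam) (psi n U2 lam x) (i-1,j-1)"
    using psi_cover_mono[OF adm x cover2[OF ij]] Vt_Qs[OF q] by simp
qed

lemma Phi_psi:
  assumes adm: "admissible n U1 U2" and x: "in_CO n U1 U2 lam x"
  shows "Phi U1 U2 n lam (psi n U2 lam x) = x"
proof (rule ext)
  note A = adm_facts[OF adm]
  fix p show "Phi U1 U2 n lam (psi n U2 lam x) p = x p"
  proof (cases "p \<in> Qs n")
    case False
    hence "p \<notin> U1" "p \<notin> U2" using A by auto
    moreover have "x p = 0" using CO_D(1)[OF x] False unfolding PA by simp
    ultimately show ?thesis unfolding Phi_def by simp
  next
    case True
    obtain i j where p: "p = (i,j)" using prod.exhaust by blast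
    show ?thesis
    proof (cases "p \<in> U2")
      case True': True
      hence "p \<notin> U1" using A by auto
      thus ?thesis using psi_eq[of i j n U2 lam x] True True' p unfolding Phi_def by simp
    next
      case False
      hence "p \<in> U1" using A True by auto
      thus ?thesis using psi_U1[of i j n U2 lam x] True False p unfolding Phi_def by simp
    qed
  qed
qed

lemma card_LP:
  assumes adm: "admissible n U1 U2" and fin: "finite (GT n (cl lam))"
  shows "card (lattice_points n U1 U2 lam) = card (GT n (cl lam))"
proof -
  let ?L = "lattice_points n U1 U2 lam"
  let ?G = "GT n (cl lam)"
  have inj1: "inj_on (psi n U2 lam) ?L"
  proof (rule inj_onI)
    fix a b assume a: "a \<in> ?L" and b: "b \<in> ?L" and e: "psi n U2 lam a = psi n U2 lam b"
    have ia: "in_CO n U1 U2 lam a" using a unfolding lattice_points_def by simp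
    have ib: "in_CO n U1 U2 lam b" using b unfolding lattice_points_def by simp
    have "a = Phi U1 U2 n lam (psi n U2 lam a)" using Phi_psi[OF adm ia] by simp
    also have "\<dots> = Phi U1 U2 n lam (psi n U2 lam b)" using e by simp
    also have "\<dots> = b" using Phi_psi[OF adm ib] by simp
    finally show "a = b" .
  qed
  have im1: "psi n U2 lam ` ?L \<subseteq> ?G" using psi_in[OF adm] unfolding lattice_points_def by blast
  have finL: "finite ?L" by (rule inj_on_finite[OF inj1 im1 fin])
  have le1: "card ?L \<le> card ?G" by (rule card_inj_on_le[OF inj1 im1 fin])
  have inj2: "inj_on (Phi U1 U2 n lam) ?G"
    by (rule inj_onI) (rule Phi_inj[OF _ _ adm])
  have im2: "Phi U1 U2 n lam ` ?G \<subseteq> ?L" using Phi_in[OF _ adm] unfolding lattice_points_def by blast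
  have le2: "card ?G \<le> card ?L" by (rule card_inj_on_le[OF inj2 im2 finL])
  show ?thesis using le1 le2 by simp
qed


theorem corollary6p4:
  fixes n :: nat and lam :: "nat \<Rightarrow> nat" and U1 U2 :: "(nat \<times> nat) set"
  assumes "n \<ge> 1"
    and "\<And>i j. i \<le> j \<Longrightarrow> j \<le> n \<Longrightarrow> lam j \<le> lam i"
    and "admissible n U1 U2"
  shows "real (card (lattice_points n U1 U2 lam)) =
    (\<Prod>(i, j)\<in>{(i, j). i < j \<and> j \<le> n}.
       (real (lam i) - real (lam j) + real j - real i) / (real j - real i))"
proof -
  have mono: "\<And>j. j < n \<Longrightarrow> cl lam (Suc j) \<le> cl lam j"
    using assms(2) by simp
  have G: "finite (GT n (cl lam)) \<and> real (card (GT n (cl lam))) = Ww (Suc n) (cl lam)"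
    by (rule GT_card[of n "cl lam", OF mono])
  have "real (card (lattice_points n U1 U2 lam)) = Ww (Suc n) (cl lam)"
    using card_LP[OF assms(3)] G by simp
  also have "\<dots> = (\<Prod>(i, j)\<in>{(i, j). i < j \<and> j \<le> n}.
       (real (lam i) - real (lam j) + real j - real i) / (real j - real i))"
  proof -
    have S: "{(i, j). i < j \<and> j < Suc n} = {(i, j). i < j \<and> j \<le> n}" by auto
    show ?thesis unfolding Ww_def Pp_def S
      by (rule prod.cong[OF refl]) (auto simp: algebra_simps)
  qed
  finally show ?thesis .
qed

end
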